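(* Let $n\ge1$ and let $\mu = [x;\,k_1\dots k_m]$ and $\nu=[x;\,\ell_1\dots\ell_{m'}]$ be two loops in $Q_n$ starting (and ending) at the same vertex $x$. Then $p_\mu p_\nu = p_\nu p_\mu$ in $C^\ast(Q_n)$.
   Context: For $n\ge1$, identify integers $0\le i<2^n$ with their $n$-digit binary representations and let $i\#k$ be $i$ with its $k$-th digit flipped. The hypercube $Q_n$ has vertex classes $U_n$ (even number of $1$'s) and $V_n$ (odd number of $1$'s), with $i\in U_n$, $j\in V_n$ adjacent iff $j = i\#k$ for some $k<n$. $C^\ast(Q_n)$ is the universal unital C*-algebra generated by projections $p_x$ ($x\in U_n\cup V_n$) with $\sum_{u\in U_n}p_u = 1 = \sum_{v\in V_n}p_v$ and $p_up_v=0$ when $u\in U_n,v\in V_n$ are non-adjacent. For a vertex $x$ and indices $k_1,\dots,k_m<n$, $[x;\,k_1\dots k_m]$ denotes the path $x_1\dots x_{m+1}$ with $x_1=x$, $x_{r+1}=x_r\#k_r$; it is a loop if $x_{m+1}=x_1$. For a path $\mu=x_1\dots x_{m+1}$, $p_\mu = p_{x_1}\cdots p_{x_{m+1}}$. *)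

theory Defs
  imports Complex_Main
begin

locale unital_cstar_algebra =
  fixes scaleC :: "complex \<Rightarrow> 'a::{real_normed_algebra_1, banach} \<Rightarrow> 'a"
    and star :: "'a \<Rightarrow> 'a"
  assumes scaleC_add_right: "scaleC c (x + y) = scaleC c x + scaleC c y"
    and scaleC_add_left: "scaleC (c + d) x = scaleC c x + scaleC d x"
    and scaleC_scaleC: "scaleC c (scaleC d x) = scaleC (c * d) x"
    and scaleC_of_real: "scaleC (complex_of_real r) x = scaleR r x"
    and mult_scaleC_left: "scaleC c x * y = scaleC c (x * y)"
    and mult_scaleC_right: "x * scaleC c y = scaleC c (x * y)"
    and norm_scaleC: "norm (scaleC c x) = cmod c * norm x"
    and star_star: "star (star x) = x"
    and star_add: "star (x + y) = star x + star y"
    and star_mult: "star (x * y) = star y * star x"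
    and star_scaleC: "star (scaleC c x) = scaleC (cnj c) (star x)"
    and cstar_identity: "norm (star x * x) = (norm x)\<^sup>2"

definition is_projection :: "('a::ring_1 \<Rightarrow> 'a) \<Rightarrow> 'a \<Rightarrow> bool" where
  "is_projection star q \<longleftrightarrow> q * q = q \<and> star q = q"

text \<open>Vertices are the integers 0 <= i < 2^n; the k-th binary digit is bit i k;
  i#k is flip_bit k i.\<close>

definition Q_U :: "nat \<Rightarrow> nat set" where
  "Q_U n = {i. i < 2 ^ n \<and> even (card {k. k < n \<and> bit i k})}"

definition Q_V :: "nat \<Rightarrow> nat set" where
  "Q_V n = {i. i < 2 ^ n \<and> odd (card {k. k < n \<and> bit i k})}"

definition Q_adj :: "nat \<Rightarrow> nat \<Rightarrow> nat \<Rightarrow> bool" where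
  "Q_adj n u v \<longleftrightarrow> (\<exists>k<n. v = flip_bit k u)"

text \<open>A family of projections satisfying the defining relations of C*(Q_n).\<close>

definition Q_rep :: "nat \<Rightarrow> ('a::ring_1 \<Rightarrow> 'a) \<Rightarrow> (nat \<Rightarrow> 'a) \<Rightarrow> bool" where
  "Q_rep n star p \<longleftrightarrow>
     (\<forall>x < 2 ^ n. is_projection star (p x)) \<and>
     (\<Sum>u\<in>Q_U n. p u) = 1 \<and>
     (\<Sum>v\<in>Q_V n. p v) = 1 \<and>
     (\<forall>u\<in>Q_U n. \<forall>v\<in>Q_V n. \<not> Q_adj n u v \<longrightarrow> p u * p v = 0)"

text \<open>path_verts x [k1,...,km] is the vertex list x1 ... x(m+1) of [x; k1...km].\<close>

fun path_verts :: "nat \<Rightarrow> nat list \<Rightarrow> nat list" where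
  "path_verts x [] = [x]"
| "path_verts x (k # ks) = x # path_verts (flip_bit k x) ks"

definition is_loop :: "nat \<Rightarrow> nat list \<Rightarrow> bool" where
  "is_loop x ks \<longleftrightarrow> last (path_verts x ks) = x"

definition path_proj :: "(nat \<Rightarrow> 'a::monoid_mult) \<Rightarrow> nat \<Rightarrow> nat list \<Rightarrow> 'a" where
  "path_proj p x ks = prod_list (map p (path_verts x ks))"

end

theory Submission
  imports Defs
begin

lemma bit_flip_nat: "bit (flip_bit k (x::nat)) t = (bit x t \<noteq> (k = t))"
  by (auto simp: bit_flip_bit_iff)

lemma flip_flip_same[simp]: "flip_bit k (flip_bit k (x::nat)) = x"
  by (rule bit_eqI) (auto simp: bit_flip_nat)

lemma flip_comm: "flip_bit k (flip_bit l (x::nat)) = flip_bit l (flip_bit k x)"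
  by (rule bit_eqI) (auto simp: bit_flip_nat)

lemma flip_less: "k < n \<Longrightarrow> (x::nat) < 2^n \<Longrightarrow> flip_bit k x < 2^n"
  by (metis take_bit_flip_bit_eq take_bit_nat_eq_self_iff not_le)

lemma card_flip_parity:
  assumes "k < n"
  shows "odd (card {t. t < n \<and> bit (flip_bit k (x::nat)) t}) = even (card {t. t < n \<and> bit x t})"
proof -
  let ?A = "{t. t < n \<and> bit x t}"
  have fin: "finite ?A" by simp
  show ?thesis
  proof (cases "bit x k")
    case True
    have "{t. t < n \<and> bit (flip_bit k x) t} = ?A - {k}" using True assms by (auto simp: bit_flip_nat)
    moreover have "k \<in> ?A" using True assms by simp
    ultimately have "card {t. t < n \<and> bit (flip_bit k x) t} + 1 = card ?A" using fin
      by (metis card_Diff1_le card_Diff_singleton_if Suc_eq_plus1 card.remove)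
    then show ?thesis by presburger
  next
    case False
    have "{t. t < n \<and> bit (flip_bit k x) t} = insert k ?A" using False assms by (auto simp: bit_flip_nat)
    moreover have "k \<notin> ?A" using False by simp
    ultimately show ?thesis using fin by simp
  qed
qed

lemma flip_class:
  assumes "k < n" "x < 2^n"
  shows "flip_bit k x \<in> Q_U n \<longleftrightarrow> x \<in> Q_V n"
    and "flip_bit k x \<in> Q_V n \<longleftrightarrow> x \<in> Q_U n"
  using card_flip_parity[OF assms(1), of x] flip_less[OF assms] assms
  by (auto simp: Q_U_def Q_V_def)

lemma class_cases: "x < 2^n \<Longrightarrow> x \<in> Q_U n \<or> x \<in> Q_V n"
  by (auto simp: Q_U_def Q_V_def)

lemma class_disj: "x \<in> Q_U n \<Longrightarrow> x \<notin> Q_V n"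
  by (auto simp: Q_U_def Q_V_def)



lemma root_unity_sum:
  assumes M: "M > 0"
  shows "(\<Sum>j<M. (cis (2 * pi / M) ^ m) ^ j) = (if M dvd m then of_nat M else 0)"
proof -
  define \<omega> where "\<omega> = cis (2 * pi / M)"
  have wM: "\<omega> ^ M = 1" unfolding \<omega>_def DeMoivre using M by simp
  show ?thesis
  proof (cases "M dvd m")
    case True
    then obtain q where "m = M * q" by blast
    then have "\<omega> ^ m = 1" by (simp add: power_mult wM)
    then show ?thesis using True unfolding \<omega>_def by simp
  next
    case False
    have ne: "\<omega> ^ m \<noteq> 1"
    proof
      assume h: "\<omega> ^ m = 1"
      have "cos (real m * (2 * pi / M)) = 1"
        using arg_cong[OF h, of Re] unfolding \<omega>_def DeMoivre by simp
      then obtain x :: int where hx: "real m * (2 * pi / M) = real_of_int x * 2 * pi"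
        using cos_one_2pi_int by blast
      then have "real m = real_of_int x * real M" using M by (simp add: field_simps)
      then have "int m = x * int M" by (metis of_int_eq_iff of_int_mult of_int_of_nat_eq)
      then have "int M dvd int m" by simp
      then show False using False by simp
    qed
    have "(\<omega> ^ m) ^ M = 1" by (metis power_mult mult.commute power_mult wM power_one)
    then have "(\<Sum>j<M. (\<omega> ^ m) ^ j) = 0" using geometric_sum[OF ne, of M] by simp
    then show ?thesis using False unfolding \<omega>_def by simp
  qed
qed
context unital_cstar_algebra
begin

lemma star_zero[simp]: "star 0 = 0"
  by (metis add_cancel_right_right star_add add_0)

lemma star_minus: "star (- x) = - star x"
  by (metis add.right_inverse eq_neg_iff_add_eq_0 star_add star_zero)

lemma star_diff: "star (x - y) = star x - star y"
  by (metis diff_conv_add_uminus star_add star_minus)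

lemma star_one[simp]: "star 1 = 1"
  by (metis mult_1_left mult_1_right star_mult star_star)

lemma scaleC_zero_right[simp]: "scaleC c 0 = 0"
  by (metis add_cancel_right_right scaleC_add_right add_0)

lemma scaleC_zero_left[simp]: "scaleC 0 x = 0"
  using scaleC_of_real[of 0 x] by simp

lemma scaleC_one[simp]: "scaleC 1 x = x"
  using scaleC_of_real[of 1 x] by simp

lemma scaleC_real: "scaleC (complex_of_real r) x = r *\<^sub>R x"
  by (rule scaleC_of_real)

lemma scaleC_sum_right: "scaleC c (sum f A) = (\<Sum>i\<in>A. scaleC c (f i))"
  by (induction A rule: infinite_finite_induct) (auto simp: scaleC_add_right)

lemma scaleC_sum_left: "scaleC (sum g A) x = (\<Sum>i\<in>A. scaleC (g i) x)"
  by (induction A rule: infinite_finite_induct) (auto simp: scaleC_add_left)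

lemma selfadj_norm_sq: "star x = x \<Longrightarrow> norm (x * x) = (norm x)\<^sup>2"
  using cstar_identity[of x] by simp

lemma proj_norm: assumes "is_projection star q" shows "norm q \<le> 1"
proof -
  have "norm q = (norm q)\<^sup>2" using selfadj_norm_sq[of q] assms by (simp add: is_projection_def)
  then have "norm q = 0 \<or> norm q = 1" by (simp add: power2_eq_square)
  then show ?thesis by auto
qed

lemma proj_compl: "is_projection star q \<Longrightarrow> is_projection star (1 - q)"
  by (auto simp: is_projection_def star_diff algebra_simps)

lemma convex_norm:
  fixes u v :: 'a
  assumes "norm u \<le> 1" "norm v \<le> 1" "0 \<le> t" "t \<le> 1"
  shows "norm (t *\<^sub>R u + (1 - t) *\<^sub>R v) \<le> 1"
proof -
  have "norm (t *\<^sub>R u + (1 - t) *\<^sub>R v) \<le> t * norm u + (1 - t) * norm v"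
    using norm_triangle_ineq[of "t *\<^sub>R u" "(1 - t) *\<^sub>R v"] assms by simp
  also have "\<dots> \<le> t * 1 + (1 - t) * 1"
    using assms by (intro add_mono mult_left_mono) auto
  finally show ?thesis by simp
qed

lemma lemA_real:
  assumes e: "is_projection star e" and sa: "star a = a" and ea: "e * a = a" and ae: "a * e = a"
    and n1: "norm (e + a) \<le> 1" and n2: "norm (e - a) \<le> 1" and s: "\<bar>s\<bar> \<le> 1"
  shows "norm (e + s *\<^sub>R a) \<le> 1"
proof -
  have "e + s *\<^sub>R a = ((1+s)/2) *\<^sub>R (e + a) + (1 - (1+s)/2) *\<^sub>R (e - a)"
    by (simp add: algebra_simps scaleR_add_left[symmetric] scaleR_diff_left[symmetric])
  also have "norm \<dots> \<le> 1" using n1 n2 s by (intro convex_norm) auto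
  finally show ?thesis .
qed

lemma sq_expand:
  fixes e a :: 'a
  assumes e: "e * e = e" and ea: "e * a = a" and ae: "a * e = a"
  shows "(e + a) * (e + a) = e + 2 *\<^sub>R a + a * a"
    and "(e - a) * (e - a) = e - 2 *\<^sub>R a + a * a"
proof -
  show "(e + a) * (e + a) = e + 2 *\<^sub>R a + a * a"
  proof -
    have "(e + a) * (e + a) = e * e + e * a + a * e + a * a" by (simp add: algebra_simps)
    also have "\<dots> = e + 2 *\<^sub>R a + a * a" using assms by (simp add: scaleR_2)
    finally show ?thesis .
  qed
  show "(e - a) * (e - a) = e - 2 *\<^sub>R a + a * a"
  proof -
    have "(e - a) * (e - a) = e * e - e * a - a * e + a * a" by (simp add: algebra_simps)
    also have "\<dots> = e - 2 *\<^sub>R a + a * a" using assms by (simp add: scaleR_2)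
    finally show ?thesis .
  qed
qed

lemma lemA_sq:
  assumes e: "is_projection star e" and sa: "star a = a" and ea: "e * a = a" and ae: "a * e = a"
    and n1: "norm (e + a) \<le> 1" and n2: "norm (e - a) \<le> 1"
  shows "norm (e + a * a) \<le> 1"
proof -
  have ee: "e * e = e" "star e = e" using e by (auto simp: is_projection_def)
  have "norm ((e + a) * (e + a)) \<le> 1"
    using selfadj_norm_sq[of "e + a"] n1 ee sa by (simp add: star_add power_le_one)
  moreover have "norm ((e - a) * (e - a)) \<le> 1"
    using selfadj_norm_sq[of "e - a"] n2 ee sa by (simp add: star_diff power_le_one)
  moreover have "e + a * a = (1/2) *\<^sub>R ((e + a) * (e + a)) + (1 - 1/2) *\<^sub>R ((e - a) * (e - a))"
    unfolding sq_expand[OF ee(1) ea ae]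
    by (simp add: algebra_simps scaleR_add_left[symmetric] scaleR_diff_left[symmetric])
  ultimately show ?thesis using convex_norm[of _ _ "1/2"] by simp
qed

lemma lemA_imag:
  assumes e: "is_projection star e" and sa: "star a = a" and ea: "e * a = a" and ae: "a * e = a"
    and n1: "norm (e + a) \<le> 1" and n2: "norm (e - a) \<le> 1" and s: "\<bar>s\<bar> \<le> 1"
  shows "norm (e + scaleC (\<i> * complex_of_real s) a) \<le> 1"
proof -
  have ee: "e * e = e" "star e = e" using e by (auto simp: is_projection_def)
  define b where "b = s *\<^sub>R a"
  have sb: "star b = b" unfolding b_def using sa scaleC_real[of s a] star_scaleC[of "complex_of_real s" a]
    by simp
  have eb: "e * b = b" "b * e = b" unfolding b_def using ea ae by auto
  have nb1: "norm (e + b) \<le> 1" unfolding b_def using lemA_real[OF assms(1-6) s] .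
  have nb2: "norm (e - b) \<le> 1" unfolding b_def using lemA_real[OF assms(1-6), of "-s"] s by simp
  have nbb: "norm (e + b * b) \<le> 1" using lemA_sq[OF e sb eb nb1 nb2] .
  define c where "c = \<i> * complex_of_real s"
  define x where "x = e + scaleC c a"
  have sx: "star x = e + scaleC (- c) a"
    unfolding x_def c_def using ee sa by (simp add: star_add star_scaleC)
  have "star x * x = e * e + e * scaleC c a + scaleC (- c) a * e + scaleC (- c) a * scaleC c a"
    unfolding sx by (simp add: x_def algebra_simps)
  also have "\<dots> = e + (scaleC c a + scaleC (- c) a) + scaleC (- c * c) (a * a)"
    using ee ea ae by (simp add: mult_scaleC_left mult_scaleC_right scaleC_scaleC algebra_simps)
  also have "scaleC c a + scaleC (- c) a = 0"
    using scaleC_add_left[of c "- c" a, symmetric] by simp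
  also have "- c * c = complex_of_real (s * s)" unfolding c_def
    by (simp add: algebra_simps)
  also have "scaleC (complex_of_real (s * s)) (a * a) = b * b"
    unfolding scaleC_real b_def by (simp add: algebra_simps)
  finally have "star x * x = e + b * b" by simp
  then have "(norm x)\<^sup>2 \<le> 1" using cstar_identity[of x] nbb by simp
  then have "norm x \<le> 1"
    by (metis abs_norm_cancel abs_square_le_1)
  then show ?thesis unfolding x_def c_def .
qed

lemma comb2:
  "scaleC \<alpha> (e + scaleC \<beta> a) + scaleC \<gamma> (e + scaleC \<delta> a) = scaleC (\<alpha> + \<gamma>) e + scaleC (\<alpha> * \<beta> + \<gamma> * \<delta>) a"
  by (simp add: scaleC_add_right scaleC_scaleC scaleC_add_left algebra_simps)

lemma lemA_complex:
  assumes e: "is_projection star e" and sa: "star a = a" and ea: "e * a = a" and ae: "a * e = a"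
    and n1: "norm (e + a) \<le> 1" and n2: "norm (e - a) \<le> 1" and z: "cmod z \<le> 1/2"
  shows "norm (e + scaleC z a) \<le> 1"
proof -
  define x where "x = Re z"
  define y where "y = Im z"
  have hx: "\<bar>2 * x\<bar> \<le> 1" unfolding x_def using abs_Re_le_cmod[of z] z by simp
  have hy: "\<bar>2 * y\<bar> \<le> 1" unfolding y_def using abs_Im_le_cmod[of z] z by simp
  have n3: "norm (e + scaleC (complex_of_real (2 * x)) a) \<le> 1"
    unfolding scaleC_real using lemA_real[OF assms(1-6) hx] .
  have n4: "norm (e + scaleC (\<i> * complex_of_real (2 * y)) a) \<le> 1"
    using lemA_imag[OF assms(1-6) hy] .
  have zz: "complex_of_real (1/2) * complex_of_real (2 * x) + complex_of_real (1/2) * (\<i> * complex_of_real (2 * y)) = z"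
    unfolding x_def y_def by (simp add: complex_eq_iff)
  have "e + scaleC z a = scaleC (complex_of_real (1/2)) (e + scaleC (complex_of_real (2 * x)) a)
      + scaleC (complex_of_real (1/2)) (e + scaleC (\<i> * complex_of_real (2 * y)) a)"
    unfolding comb2 zz by simp
  also have "\<dots> = (1/2) *\<^sub>R (e + scaleC (complex_of_real (2 * x)) a)
      + (1 - 1/2) *\<^sub>R (e + scaleC (\<i> * complex_of_real (2 * y)) a)"
    unfolding scaleC_real by simp
  also have "norm \<dots> \<le> 1" using n3 n4 by (intro convex_norm) auto
  finally show ?thesis .
qed

lemma eake:
  fixes e a :: 'a
  assumes ee: "e * e = e" and ae: "a * e = a"
  shows "e * a ^ k * e = e * a ^ k"
proof (cases k)
  case 0 then show ?thesis using ee by simp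
next
  case (Suc m)
  have "a ^ k * e = a ^ k" unfolding Suc power_Suc2 using ae by (simp add: mult.assoc)
  then show ?thesis by (simp add: mult.assoc)
qed

lemma binom_e:
  fixes e a :: 'a
  assumes ee: "e * e = e" and ea: "e * a = a" and ae: "a * e = a"
  shows "e * (e + scaleC z a) ^ K = (\<Sum>k\<le>K. scaleC (of_nat (K choose k) * z ^ k) (e * a ^ k))"
proof (induction K)
  case 0
  then show ?case using ee by simp
next
  case (Suc K)
  define f where "f k = scaleC (of_nat (K choose k) * z ^ k) (e * a ^ k)" for k
  have fK: "f (Suc K) = 0" unfolding f_def by (simp add: binomial_eq_0)
  have shift: "(\<Sum>k\<le>K. f k) = f 0 + (\<Sum>k\<le>K. f (Suc k))"
  proof -
    have "(\<Sum>k\<le>Suc K. f k) = f 0 + (\<Sum>k\<le>K. f (Suc k))" by (rule sum.atMost_Suc_shift)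
    moreover have "(\<Sum>k\<le>Suc K. f k) = (\<Sum>k\<le>K. f k)" using fK by simp
    ultimately show ?thesis by simp
  qed
  have "e * (e + scaleC z a) ^ Suc K = (e * (e + scaleC z a) ^ K) * (e + scaleC z a)"
    by (simp only: power_Suc2 mult.assoc)
  also have "\<dots> = (\<Sum>k\<le>K. f k * (e + scaleC z a))" unfolding Suc f_def by (simp add: sum_distrib_right)
  also have "\<dots> = (\<Sum>k\<le>K. f k + scaleC (of_nat (K choose k) * z ^ Suc k) (e * a ^ Suc k))"
  proof (rule sum.cong[OF refl])
    fix k
    have "e * a ^ k * scaleC z a = scaleC z (e * a ^ Suc k)"
      by (simp only: mult_scaleC_right power_Suc2 mult.assoc)
    then have "f k * scaleC z a = scaleC (of_nat (K choose k) * z ^ Suc k) (e * a ^ Suc k)"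
      unfolding f_def by (simp only: mult_scaleC_left scaleC_scaleC) (simp add: ac_simps)
    moreover have "f k * e = f k"
      unfolding f_def using eake[OF ee ae, of k] by (simp only: mult_scaleC_left)
    ultimately show "f k * (e + scaleC z a) = f k + scaleC (of_nat (K choose k) * z ^ Suc k) (e * a ^ Suc k)"
      by (simp only: distrib_left)
  qed
  also have "\<dots> = (\<Sum>k\<le>K. f k) + (\<Sum>k\<le>K. scaleC (of_nat (K choose k) * z ^ Suc k) (e * a ^ Suc k))"
    by (simp add: sum.distrib)
  also have "\<dots> = f 0 + (\<Sum>k\<le>K. scaleC (of_nat (Suc K choose Suc k) * z ^ Suc k) (e * a ^ Suc k))"
  proof -
    have "(\<Sum>k\<le>K. f k) + (\<Sum>k\<le>K. scaleC (of_nat (K choose k) * z ^ Suc k) (e * a ^ Suc k))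
      = f 0 + (\<Sum>k\<le>K. f (Suc k) + scaleC (of_nat (K choose k) * z ^ Suc k) (e * a ^ Suc k))"
      by (simp only: shift sum.distrib add.assoc)
    also have "(\<Sum>k\<le>K. f (Suc k) + scaleC (of_nat (K choose k) * z ^ Suc k) (e * a ^ Suc k))
      = (\<Sum>k\<le>K. scaleC (of_nat (Suc K choose Suc k) * z ^ Suc k) (e * a ^ Suc k))"
      unfolding f_def by (intro sum.cong refl) (simp add: scaleC_add_left[symmetric] algebra_simps)
    finally show ?thesis .
  qed
  also have "\<dots> = (\<Sum>k\<le>Suc K. scaleC (of_nat (Suc K choose k) * z ^ k) (e * a ^ k))"
    unfolding sum.atMost_Suc_shift[of _ K] f_def by simp
  finally show ?case .
qed

lemma dvd_crit:
  assumes "K \<ge> 1" "k \<le> K"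
  shows "(Suc K dvd (K + k)) = (k = 1)"
proof
  assume "Suc K dvd K + k"
  then obtain q where q: "K + k = Suc K * q" by blast
  have "q \<noteq> 0"
  proof
    assume "q = 0" then show False using q assms by simp
  qed
  moreover have "q < 2"
  proof (rule ccontr)
    assume "\<not> q < 2"
    then have "Suc K * 2 \<le> Suc K * q" by (intro mult_le_mono2) simp
    moreover have "Suc K * 2 = 2 * K + 2" by simp
    ultimately show False using q assms by linarith
  qed
  ultimately have "q = 1" by auto
  then show "k = 1" using q by simp
qed simp

lemma lemA_bound:
  assumes e: "is_projection star e" and sa: "star a = a" and ea: "e * a = a" and ae: "a * e = a"
    and n1: "norm (e + a) \<le> 1" and n2: "norm (e - a) \<le> 1" and K: "K \<ge> 1"
  shows "norm a \<le> 2 / real K"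
proof -
  have ee: "e * e = e" using e by (simp add: is_projection_def)
  have ne: "norm e \<le> 1" using proj_norm[OF e] .
  define M where "M = Suc K"
  define \<omega> where "\<omega> = cis (2 * pi / M)"
  define r where "r = complex_of_real (1/2)"
  define w where "w j = (\<omega> ^ K) ^ j" for j :: nat
  define X where "X = (\<Sum>j<M. scaleC (w j) (e * (e + scaleC (r * \<omega> ^ j) a) ^ K))"
  have normX: "norm X \<le> real M"
  proof -
    have "norm X \<le> (\<Sum>j<M. norm (scaleC (w j) (e * (e + scaleC (r * \<omega> ^ j) a) ^ K)))"
      unfolding X_def by (rule norm_sum)
    also have "\<dots> \<le> (\<Sum>j<M. 1)"
    proof (rule sum_mono)
      fix j
      have cw: "cmod (w j) = 1" unfolding w_def \<omega>_def by (simp add: norm_power)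
      have "cmod (r * \<omega> ^ j) \<le> 1/2" unfolding r_def \<omega>_def by (simp add: norm_mult norm_power)
      then have nE: "norm (e + scaleC (r * \<omega> ^ j) a) \<le> 1" using lemA_complex[OF assms(1-6)] by blast
      have "norm (e * (e + scaleC (r * \<omega> ^ j) a) ^ K) \<le> norm e * norm ((e + scaleC (r * \<omega> ^ j) a) ^ K)"
        by (rule norm_mult_ineq)
      also have "\<dots> \<le> 1 * 1"
      proof (rule mult_mono)
        have "norm (e + scaleC (r * \<omega> ^ j) a) ^ K \<le> 1" using nE by (simp add: power_le_one)
        then show "norm ((e + scaleC (r * \<omega> ^ j) a) ^ K) \<le> 1"
          using norm_power_ineq[of "e + scaleC (r * \<omega> ^ j) a" K] by linarith
      qed (use ne in auto)
      finally show "norm (scaleC (w j) (e * (e + scaleC (r * \<omega> ^ j) a) ^ K)) \<le> 1"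
        by (simp add: norm_scaleC cw)
    qed
    finally show ?thesis by simp
  qed
  have "X = (\<Sum>j<M. \<Sum>k\<le>K. scaleC (w j * (of_nat (K choose k) * (r * \<omega> ^ j) ^ k)) (e * a ^ k))"
    unfolding X_def binom_e[OF ee ea ae] by (simp add: scaleC_sum_right scaleC_scaleC)
  also have "\<dots> = (\<Sum>k\<le>K. \<Sum>j<M. scaleC (w j * (of_nat (K choose k) * (r * \<omega> ^ j) ^ k)) (e * a ^ k))"
    by (rule sum.swap)
  also have "\<dots> = (\<Sum>k\<le>K. scaleC (of_nat (K choose k) * r ^ k * (\<Sum>j<M. (\<omega> ^ (K + k)) ^ j)) (e * a ^ k))"
  proof (rule sum.cong[OF refl])
    fix k
    have "(\<Sum>j<M. scaleC (w j * (of_nat (K choose k) * (r * \<omega> ^ j) ^ k)) (e * a ^ k))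
        = scaleC (\<Sum>j<M. w j * (of_nat (K choose k) * (r * \<omega> ^ j) ^ k)) (e * a ^ k)"
      by (simp add: scaleC_sum_left)
    also have "(\<Sum>j<M. w j * (of_nat (K choose k) * (r * \<omega> ^ j) ^ k))
        = (\<Sum>j<M. of_nat (K choose k) * r ^ k * (\<omega> ^ (K + k)) ^ j)"
    proof (intro sum.cong refl)
      fix j
      have "(\<omega> ^ K) ^ j * (of_nat (K choose k) * (r * \<omega> ^ j) ^ k) = of_nat (K choose k) * r ^ k * (\<omega> ^ (K * j) * \<omega> ^ (j * k))"
        by (simp add: power_mult_distrib power_mult)
      also have "\<omega> ^ (K * j) * \<omega> ^ (j * k) = (\<omega> ^ (K + k)) ^ j"
        by (simp add: power_add[symmetric] power_mult[symmetric] algebra_simps)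
      finally show "w j * (of_nat (K choose k) * (r * \<omega> ^ j) ^ k) = of_nat (K choose k) * r ^ k * (\<omega> ^ (K + k)) ^ j"
        unfolding w_def .
    qed
    also have "\<dots> = of_nat (K choose k) * r ^ k * (\<Sum>j<M. (\<omega> ^ (K + k)) ^ j)"
      by (simp add: sum_distrib_left)
    finally show "(\<Sum>j<M. scaleC (w j * (of_nat (K choose k) * (r * \<omega> ^ j) ^ k)) (e * a ^ k))
        = scaleC (of_nat (K choose k) * r ^ k * (\<Sum>j<M. (\<omega> ^ (K + k)) ^ j)) (e * a ^ k)" .
  qed
  also have "\<dots> = (\<Sum>k\<le>K. if k = 1 then scaleC (of_nat K * r * of_nat M) a else 0)"
  proof (rule sum.cong[OF refl])
    fix k assume "k \<in> {..K}"
    then have kK: "k \<le> K" by simp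
    have "(\<Sum>j<M. (\<omega> ^ (K + k)) ^ j) = (if M dvd (K + k) then of_nat M else 0)"
      unfolding \<omega>_def by (rule root_unity_sum) (simp add: M_def)
    also have "\<dots> = (if k = 1 then of_nat M else 0)"
      unfolding M_def using dvd_crit[OF K kK] by simp
    finally show "scaleC (of_nat (K choose k) * r ^ k * (\<Sum>j<M. (\<omega> ^ (K + k)) ^ j)) (e * a ^ k)
        = (if k = 1 then scaleC (of_nat K * r * of_nat M) a else 0)"
      using ea by auto
  qed
  also have "\<dots> = scaleC (of_nat K * r * of_nat M) a"
    using K by (simp add: sum.delta)
  finally have "X = scaleC (of_nat K * r * of_nat M) a" .
  then have "norm X = real K * (1/2) * real M * norm a"
    by (simp add: norm_scaleC r_def norm_mult)
  then have "real K * (1/2) * real M * norm a \<le> real M" using normX by simp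
  then have "real M * (real K * (1/2) * norm a) \<le> real M * 1" by (simp add: algebra_simps)
  then have "real K * (1/2) * norm a \<le> 1" using M_def
    by (subst (asm) mult_le_cancel_left_pos) auto
  then show ?thesis using K by (simp add: field_simps)
qed

lemma lemA:
  assumes e: "is_projection star e" and sa: "star a = a" and ea: "e * a = a" and ae: "a * e = a"
    and n1: "norm (e + a) \<le> 1" and n2: "norm (e - a) \<le> 1"
  shows "a = 0"
proof (rule ccontr)
  assume "a \<noteq> 0"
  then have pos: "norm a > 0" by simp
  obtain K :: nat where hK: "2 / norm a < real K" using reals_Archimedean2 by blast
  have "real K > 0" using hK pos using divide_pos_pos[of 2 "norm a"] by linarith
  then have K1: "K \<ge> 1" by simp
  have "norm a \<le> 2 / real K" using lemA_bound[OF assms K1] .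
  moreover have "2 / real K < norm a" using hK pos \<open>real K > 0\<close> by (simp add: field_simps)
  ultimately show False by simp
qed

lemma compress_bound:
  assumes e: "is_projection star e" and q: "is_projection star q"
  shows "norm (e - e * q * e) \<le> 1"
proof -
  have ee: "e * e = e" "star e = e" using e by (auto simp: is_projection_def)
  have qq: "q * q = q" "star q = q" using q by (auto simp: is_projection_def)
  define c where "c = (1 - q) * e"
  have sc: "star c = e * (1 - q)" unfolding c_def by (simp add: star_mult star_diff ee qq)
  have "star c * c = e * ((1 - q) * (1 - q)) * e" by (subst sc) (simp add: c_def mult.assoc)
  also have "(1 - q) * (1 - q) = 1 - q" using qq by (simp add: algebra_simps)
  also have "e * (1 - q) * e = e - e * q * e" using ee by (simp add: algebra_simps)
  finally have h: "star c * c = e - e * q * e" .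
  have "norm c \<le> norm (1 - q) * norm e" unfolding c_def by (rule norm_mult_ineq)
  also have "\<dots> \<le> 1 * 1"
    using proj_norm[OF proj_compl[OF q]] proj_norm[OF e] by (intro mult_mono) auto
  finally have "norm c \<le> 1" by simp
  then have "(norm c)\<^sup>2 \<le> 1" by (simp add: power_le_one)
  then show ?thesis using cstar_identity[of c] h by simp
qed

lemma proj_orth:
  assumes fin: "finite S" and pr: "\<forall>i\<in>S. is_projection star (q i)" and sum1: "(\<Sum>i\<in>S. q i) = 1"
    and u: "u \<in> S" and w: "w \<in> S" and uw: "u \<noteq> w"
  shows "q u * q w = 0"
proof -
  define e where "e = q u"
  have e: "is_projection star e" using pr u e_def by auto
  have ee: "e * e = e" "star e = e" using e by (auto simp: is_projection_def)
  define a where "a i = e * q i * e" for i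
  have a_sa: "star (a i) = a i" if "i \<in> S" for i
    using pr that ee unfolding a_def by (simp add: star_mult is_projection_def mult.assoc)
  have a_e: "e * a i = a i" "a i * e = a i" for i
    unfolding a_def using ee by (simp_all add: mult.assoc[symmetric]) (simp add: mult.assoc)
  have a_n: "norm (e - a i) \<le> 1" if "i \<in> S" for i
    unfolding a_def using compress_bound[OF e] pr that by auto
  have "(\<Sum>i\<in>S. q i) = q u + (\<Sum>i\<in>S - {u}. q i)" using fin u by (simp add: sum.remove)
  then have s1: "(\<Sum>i\<in>S - {u}. q i) = 1 - e" using sum1 e_def by (simp add: algebra_simps)
  have "(\<Sum>i\<in>S - {u}. a i) = e * (\<Sum>i\<in>S - {u}. q i) * e"
    unfolding a_def by (simp add: sum_distrib_left sum_distrib_right)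
  also have "\<dots> = 0" unfolding s1 using ee by (simp add: algebra_simps)
  finally have s0: "(\<Sum>i\<in>S - {u}. a i) = 0" .
  define T where "T = S - {u} - {w}"
  have finT: "finite T" using fin T_def by simp
  have "(\<Sum>i\<in>S - {u}. a i) = a w + (\<Sum>i\<in>T. a i)"
    unfolding T_def using fin w uw by (simp add: sum.remove)
  then have aw: "a w = - (\<Sum>i\<in>T. a i)" using s0 by (simp add: eq_neg_iff_add_eq_0)
  have aw0: "a w = 0"
  proof (cases "T = {}")
    case True then show ?thesis using aw by simp
  next
    case False
    define m where "m = card T"
    have m0: "real m > 0" using False finT m_def by (simp add: card_gt_0_iff)
    define t where "t = 1 / real m"
    have t: "0 < t" "t \<le> 1" using m0 unfolding t_def by (auto simp: field_simps)
    define c where "c = t *\<^sub>R a w"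
    have "e + c = t *\<^sub>R (\<Sum>i\<in>T. e - a i)"
    proof -
      have "(\<Sum>i\<in>T. e - a i) = real m *\<^sub>R e - (\<Sum>i\<in>T. a i)"
        by (simp add: sum_subtractf m_def scaleR_conv_of_real)
      then have "t *\<^sub>R (\<Sum>i\<in>T. e - a i) = (t * real m) *\<^sub>R e - t *\<^sub>R (\<Sum>i\<in>T. a i)"
        by (simp add: scaleR_diff_right)
      also have "t * real m = 1" using m0 t_def by simp
      finally show ?thesis unfolding c_def aw by (simp add: scaleR_minus_right)
    qed
    also have "norm \<dots> \<le> t * (\<Sum>i\<in>T. norm (e - a i))"
      using norm_sum[of "\<lambda>i. e - a i" T] t by (simp add: mult_left_mono)
    also have "\<dots> \<le> t * (\<Sum>i\<in>T. 1)"
      using a_n t unfolding T_def by (intro mult_left_mono sum_mono) auto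
    also have "\<dots> = 1" using m0 t_def m_def by simp
    finally have n1: "norm (e + c) \<le> 1" .
    have "e - c = t *\<^sub>R (e - a w) + (1 - t) *\<^sub>R e"
      unfolding c_def by (simp add: algebra_simps)
    also have "norm \<dots> \<le> 1"
      using a_n[OF w] proj_norm[OF e] t by (intro convex_norm) auto
    finally have n2: "norm (e - c) \<le> 1" .
    have "c = 0"
    proof (rule lemA[OF e _ _ _ n1 n2])
      show "star c = c" unfolding c_def using a_sa[OF w] scaleC_real[of t] star_scaleC[of "complex_of_real t"]
        by (metis complex_cnj_complex_of_real)
      show "e * c = c" "c * e = c" unfolding c_def using a_e by auto
    qed
    then show ?thesis using t unfolding c_def by simp
  qed
  have "(norm (q w * e))\<^sup>2 = norm (star (q w * e) * (q w * e))" by (rule cstar_identity[symmetric])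
  also have "star (q w * e) * (q w * e) = a w"
  proof -
    have qw: "q w * q w = q w" "star (q w) = q w" using pr w by (auto simp: is_projection_def)
    have "star (q w * e) * (q w * e) = e * (q w * q w) * e" by (simp only: star_mult ee(2) qw(2) mult.assoc)
    then show ?thesis unfolding a_def qw by simp
  qed
  finally have "q w * e = 0" using aw0 by simp
  then have "star (q w * e) = 0" by simp
  then show ?thesis using pr w ee unfolding e_def by (simp add: star_mult is_projection_def)
qed

end


lemma pv_nonempty[simp]: "path_verts x ks \<noteq> []"
  by (cases ks) auto

definition endv :: "nat \<Rightarrow> nat list \<Rightarrow> nat" where
  "endv x ks = last (path_verts x ks)"

lemma endv_nil[simp]: "endv x [] = x" by (simp add: endv_def)
lemma endv_cons[simp]: "endv x (k # ks) = endv (flip_bit k x) ks" by (simp add: endv_def)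

lemma pv_append: "path_verts x (ks @ ls) = butlast (path_verts x ks) @ path_verts (endv x ks) ls"
  by (induction ks arbitrary: x) auto

lemma pv_hd: "path_verts x ks = x # tl (path_verts x ks)"
  by (cases ks) auto

lemma endv_less: "\<forall>k\<in>set ks. k < n \<Longrightarrow> x < 2^n \<Longrightarrow> endv x ks < 2^n"
  by (induction ks arbitrary: x) (auto simp: flip_less)

lemma bit_endv: "bit (endv x ks) t = (bit x t \<noteq> odd (count_list ks t))"
  by (induction ks arbitrary: x) (auto simp: bit_flip_nat)

lemma loop_even: "is_loop x ks \<Longrightarrow> even (count_list ks t)"
  using bit_endv[of x ks t] unfolding is_loop_def endv_def[symmetric] by auto

lemma bits_lemma:
  assumes "w = flip_bit i y" "z = flip_bit j w" "z = flip_bit l (flip_bit k (y::nat))" "k \<noteq> l"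
  shows "i = k \<or> i = l"
proof (rule ccontr)
  assume h: "\<not> (i = k \<or> i = l)"
  have eq: "((t = i) \<noteq> (t = j)) = ((t = k) \<noteq> (t = l))" for t
  proof -
    have "bit z t = ((bit y t \<noteq> (i = t)) \<noteq> (j = t))" using assms(1,2) by (simp add: bit_flip_nat)
    moreover have "bit z t = ((bit y t \<noteq> (k = t)) \<noteq> (l = t))" using assms(3) by (simp add: bit_flip_nat)
    ultimately show ?thesis by auto
  qed
  from eq[of i] h have "i = j" by auto
  with eq[of k] h assms(4) show False by auto
qed

locale hcube = unital_cstar_algebra scaleC star
  for scaleC :: "complex \<Rightarrow> 'a::{real_normed_algebra_1, banach} \<Rightarrow> 'a" and star +
  fixes n :: nat and p :: "nat \<Rightarrow> 'a"
  assumes rep: "Q_rep n star p"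
begin

lemma proj: "x < 2^n \<Longrightarrow> is_projection star (p x)"
  using rep by (simp add: Q_rep_def)

lemma pp: "x < 2^n \<Longrightarrow> p x * p x = p x"
  using proj by (simp add: is_projection_def)

lemma sp: "x < 2^n \<Longrightarrow> star (p x) = p x"
  using proj by (simp add: is_projection_def)

lemma finU: "finite (Q_U n)" by (rule finite_subset[of _ "{..<2^n}"]) (auto simp: Q_U_def)
lemma finV: "finite (Q_V n)" by (rule finite_subset[of _ "{..<2^n}"]) (auto simp: Q_V_def)
lemma lessU: "x \<in> Q_U n \<Longrightarrow> x < 2^n" by (simp add: Q_U_def)
lemma lessV: "x \<in> Q_V n \<Longrightarrow> x < 2^n" by (simp add: Q_V_def)

lemma orth_same:
  assumes "y < 2^n" "z < 2^n" "(y \<in> Q_U n) = (z \<in> Q_U n)" "y \<noteq> z"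
  shows "p y * p z = 0"
proof (cases "y \<in> Q_U n")
  case True
  then show ?thesis using proj_orth[OF finU, of p y z] assms rep lessU proj
    by (auto simp: Q_rep_def)
next
  case False
  then have "y \<in> Q_V n" "z \<in> Q_V n" using assms class_cases by auto
  then show ?thesis using proj_orth[OF finV, of p y z] assms rep lessV proj
    by (auto simp: Q_rep_def)
qed

lemma nonadj_zero:
  assumes "y < 2^n" "w < 2^n" "(y \<in> Q_U n) \<noteq> (w \<in> Q_U n)" "\<not> (\<exists>i<n. w = flip_bit i y)"
  shows "p y * p w = 0"
proof (cases "y \<in> Q_U n")
  case True
  then have "w \<in> Q_V n" using assms class_cases by auto
  then show ?thesis using True assms rep by (auto simp: Q_rep_def Q_adj_def)
next
  case False
  then have yv: "y \<in> Q_V n" and wu: "w \<in> Q_U n" using assms class_cases by auto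
  have "\<not> Q_adj n w y" using assms(4) unfolding Q_adj_def by (metis flip_flip_same)
  then have "p w * p y = 0" using yv wu rep by (auto simp: Q_rep_def)
  then have "star (p w * p y) = 0" by simp
  then show ?thesis using sp assms by (simp add: star_mult)
qed

lemma anticomm:
  assumes y: "y < 2^n" and k: "k < n" and l: "l < n" and kl: "k \<noteq> l"
  defines "z \<equiv> flip_bit l (flip_bit k y)"
  shows "p y * p (flip_bit k y) * p z = - (p y * p (flip_bit l y) * p z)"
proof -
  define W where "W = (if y \<in> Q_U n then Q_V n else Q_U n)"
  define a where "a = flip_bit k y"
  define b where "b = flip_bit l y"
  have aless: "a < 2^n" "b < 2^n" using flip_less y k l a_def b_def by auto
  have zless: "z < 2^n" using flip_less y k l z_def by auto
  have finW: "finite W" using finU finV W_def by auto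
  have sumW: "(\<Sum>w\<in>W. p w) = 1" using rep W_def by (auto simp: Q_rep_def)
  have Wcls: "w \<in> W \<longleftrightarrow> w < 2^n \<and> (w \<in> Q_U n) \<noteq> (y \<in> Q_U n)" for w
    using W_def class_cases[of w n] class_disj[of w n] y class_cases[of y n] class_disj[of y n]
      lessU lessV by auto
  have clsa: "(a \<in> Q_U n) \<noteq> (y \<in> Q_U n)" using flip_class[OF k y] class_cases[OF y] class_disj a_def by blast
  have clsb: "(b \<in> Q_U n) \<noteq> (y \<in> Q_U n)" using flip_class[OF l y] class_cases[OF y] class_disj b_def by blast
  have clsz: "(z \<in> Q_U n) = (y \<in> Q_U n)"
    using flip_class[OF l aless(1)] clsa class_cases[OF aless(1)] class_disj z_def a_def by blast
  have abW: "a \<in> W" "b \<in> W" using Wcls aless clsa clsb by auto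
  have ab: "a \<noteq> b" unfolding a_def b_def using kl
    by (metis bit_flip_nat)
  have yz: "y \<noteq> z"
  proof
    assume "y = z"
    then have "bit y k = bit z k" by simp
    then show False unfolding z_def using kl by (simp add: bit_flip_nat)
  qed
  have "0 = p y * p z" using orth_same[OF y zless clsz[symmetric] yz] by simp
  also have "\<dots> = p y * (\<Sum>w\<in>W. p w) * p z" using sumW by simp
  also have "\<dots> = (\<Sum>w\<in>W. p y * p w * p z)" by (simp add: sum_distrib_left sum_distrib_right)
  also have "\<dots> = (\<Sum>w\<in>{a, b}. p y * p w * p z)"
  proof (rule sum.mono_neutral_right[OF finW])
    show "{a, b} \<subseteq> W" using abW by auto
    show "\<forall>w\<in>W - {a, b}. p y * p w * p z = 0"
    proof
      fix w assume wW: "w \<in> W - {a, b}"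
      then have wl: "w < 2^n" and wc: "(w \<in> Q_U n) \<noteq> (y \<in> Q_U n)" using Wcls by auto
      show "p y * p w * p z = 0"
      proof (cases "\<exists>i<n. w = flip_bit i y")
        case False
        have wc': "(y \<in> Q_U n) \<noteq> (w \<in> Q_U n)" using wc by auto
        then show ?thesis using nonadj_zero[OF y wl wc' False] by simp
      next
        case True
        then obtain i where i: "i < n" "w = flip_bit i y" by blast
        have "\<not> (\<exists>j<n. z = flip_bit j w)"
        proof
          assume "\<exists>j<n. z = flip_bit j w"
          then obtain j where "z = flip_bit j w" by blast
          then have "i = k \<or> i = l" using bits_lemma[OF i(2) _ _ kl] z_def by simp
          then show False using wW i a_def b_def by auto
        qed
        then have "p w * p z = 0" using nonadj_zero[OF wl zless] wc clsz by auto
        then show ?thesis by (simp add: mult.assoc)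
      qed
    qed
  qed
  also have "\<dots> = p y * p a * p z + p y * p b * p z" using ab by simp
  finally show ?thesis unfolding a_def b_def by (simp add: eq_neg_iff_add_eq_0)
qed

abbreviation P where "P x ks \<equiv> path_proj p x ks"

lemma P_append: "P x (ks @ ls) = prod_list (map p (butlast (path_verts x ks))) * P (endv x ks) ls"
  unfolding path_proj_def pv_append by simp

lemma P_head: "x < 2^n \<Longrightarrow> p x * P x ks = P x ks"
proof -
  assume x: "x < 2^n"
  have "P x ks = p x * prod_list (map p (tl (path_verts x ks)))"
    unfolding path_proj_def by (subst pv_hd) simp
  then show ?thesis using pp[OF x] by (simp add: mult.assoc[symmetric])
qed

lemma P_concat:
  assumes x: "x < 2^n" and ks: "\<forall>k\<in>set ks. k < n"
  shows "P x ks * P (endv x ks) ls = P x (ks @ ls)"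
proof -
  have v: "endv x ks < 2^n" using endv_less[OF ks x] .
  have h: "path_verts x ks = butlast (path_verts x ks) @ [endv x ks]"
    unfolding endv_def by simp
  have "P x ks = prod_list (map p (butlast (path_verts x ks) @ [endv x ks]))"
    unfolding path_proj_def by (subst (1) h) (rule refl)
  then have "P x ks = prod_list (map p (butlast (path_verts x ks))) * p (endv x ks)"
    by simp
  then have "P x ks * P (endv x ks) ls = prod_list (map p (butlast (path_verts x ks))) * (p (endv x ks) * P (endv x ks) ls)"
    by (simp add: mult.assoc)
  also have "\<dots> = P x (ks @ ls)" unfolding P_head[OF v] P_append ..
  finally show ?thesis .
qed

lemma P_two:
  assumes y: "y < 2^n" and k: "k < n" and l: "l < n"
  shows "P y (k # l # bs) = (p y * p (flip_bit k y) * p (flip_bit l (flip_bit k y))) * P (flip_bit l (flip_bit k y)) bs"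
proof -
  have z: "flip_bit l (flip_bit k y) < 2^n" using flip_less y k l by auto
  have "P y (k # l # bs) = p y * (p (flip_bit k y) * P (flip_bit l (flip_bit k y)) bs)"
    unfolding path_proj_def by simp
  also have "\<dots> = p y * (p (flip_bit k y) * (p (flip_bit l (flip_bit k y)) * P (flip_bit l (flip_bit k y)) bs))"
    unfolding P_head[OF z] ..
  finally show ?thesis by (simp add: mult.assoc)
qed

lemma P_swap:
  assumes x: "x < 2^n" and idx: "\<forall>i\<in>set as. i < n" and k: "k < n" and l: "l < n" and kl: "k \<noteq> l"
  shows "P x (as @ k # l # bs) = - P x (as @ l # k # bs)"
proof -
  define y where "y = endv x as"
  have y: "y < 2^n" using endv_less[OF idx x] y_def by simp
  have "P y (k # l # bs) = - P y (l # k # bs)"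
    unfolding P_two[OF y k l] P_two[OF y l k] flip_comm[of k l y] anticomm[OF y k l kl]
    by (simp add: flip_comm)
  then show ?thesis unfolding P_append y_def by simp
qed

lemma P_move:
  assumes x: "x < 2^n" and idx: "\<forall>i\<in>set (as @ k # cs). i < n"
  shows "P x (as @ k # cs @ bs) = (-1) ^ length (filter (\<lambda>l. l \<noteq> k) cs) * P x (as @ cs @ k # bs)"
  using idx
proof (induction cs arbitrary: as)
  case Nil
  then show ?case by simp
next
  case (Cons c cs)
  have IH: "P x ((as @ [c]) @ k # cs @ bs) = (-1) ^ length (filter (\<lambda>l. l \<noteq> k) cs) * P x ((as @ [c]) @ cs @ k # bs)"
    using Cons.IH[of "as @ [c]"] Cons.prems by simp
  show ?case
  proof (cases "c = k")
    case True
    then show ?thesis using IH by simp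
  next
    case False
    have "P x (as @ k # c # cs @ bs) = - P x (as @ c # k # cs @ bs)"
      using P_swap[OF x, of as k c] Cons.prems False by auto
    also have "P x (as @ c # k # cs @ bs) = (-1) ^ length (filter (\<lambda>l. l \<noteq> k) cs) * P x ((as @ [c]) @ cs @ k # bs)"
      using IH by simp
    finally show ?thesis using False by simp
  qed
qed

lemma P_block:
  assumes x: "x < 2^n" and idx: "\<forall>i\<in>set (as @ ds @ cs). i < n"
  shows "P x (as @ ds @ cs) = (-1) ^ sum_list (map (\<lambda>d. length (filter (\<lambda>l. l \<noteq> d) cs)) ds) * P x (as @ cs @ ds)"
  using idx
proof (induction ds arbitrary: as)
  case Nil
  then show ?case by simp
next
  case (Cons d ds)
  have "P x (as @ (d # ds) @ cs) = P x ((as @ [d]) @ ds @ cs)" by simp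
  also have "\<dots> = (-1) ^ sum_list (map (\<lambda>d. length (filter (\<lambda>l. l \<noteq> d) cs)) ds) * P x ((as @ [d]) @ cs @ ds)"
    using Cons.IH[of "as @ [d]"] Cons.prems by simp
  also have "P x ((as @ [d]) @ cs @ ds) = P x (as @ d # cs @ ds)" by simp
  also have "\<dots> = (-1) ^ length (filter (\<lambda>l. l \<noteq> d) cs) * P x (as @ cs @ d # ds)"
    using P_move[OF x, of as d cs ds] Cons.prems by auto
  finally show ?case by (simp add: mult.assoc[symmetric] power_add[symmetric] add.commute)
qed

end



theorem lemma3p4:
  fixes n x :: nat and ks ls :: "nat list"
    and scaleC :: "complex \<Rightarrow> 'a::{real_normed_algebra_1, banach} \<Rightarrow> 'a"
    and star :: "'a \<Rightarrow> 'a" and p :: "nat \<Rightarrow> 'a"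
  assumes "unital_cstar_algebra scaleC star"
    and "Q_rep n star p"
    and "1 \<le> n" and "x < 2 ^ n"
    and "\<forall>k\<in>set ks. k < n" and "\<forall>l\<in>set ls. l < n"
    and "is_loop x ks" and "is_loop x ls"
  shows "path_proj p x ks * path_proj p x ls = path_proj p x ls * path_proj p x ks"
proof -
  interpret hcube scaleC star n p using assms(1,2) by (simp add: hcube_def hcube_axioms_def)
  have ex: "endv x ks = x" "endv x ls = x" using assms(7,8) by (simp_all add: is_loop_def endv_def)
  define S where "S = sum_list (map (\<lambda>d. length (filter (\<lambda>l. l \<noteq> d) ls)) ks)"
  have evS: "even S"
  proof -
    have "S = (\<Sum>d\<in>set ks. count_list ks d * length (filter (\<lambda>l. l \<noteq> d) ls))"
      unfolding S_def by (rule sum_list_map_eq_sum_count)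
    also have "even \<dots>" using loop_even[OF assms(7)] by (intro dvd_sum) simp
    finally show ?thesis .
  qed
  have "path_proj p x ks * path_proj p x ls = path_proj p x (ks @ ls)"
    using P_concat[OF assms(4) assms(5), of ls] ex by simp
  also have "\<dots> = (-1) ^ S * path_proj p x (ls @ ks)"
    using P_block[OF assms(4), of "[]" ks ls] assms(5,6) unfolding S_def by auto
  also have "(-1) ^ S = (1::'a)" using evS by simp
  also have "path_proj p x (ls @ ks) = path_proj p x ls * path_proj p x ks"
    using P_concat[OF assms(4) assms(6), of ks] ex by simp
  finally show ?thesis by simp
qed


end
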